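(* Let $n\ge1$ and $\alpha^1,\dots,\alpha^n\in\mathrm{ord}$. It is impossible that $\alpha^i<\alpha^1,\dots,\alpha^n$ holds for every $i\in\{1,\dots,n\}$.
   Context: Work constructively. Let $\mathfrak F$ be a set of index sets containing $\mathbb N$ and each $\mathbb N_k=\{n\in\mathbb N:n<k\}$ ($k\ge0$), closed (up to isomorphism) under finitely enumerated subsets, sets of finitely enumerated subsets, and disjoint unions indexed by elements of $\mathfrak F$. A finitely enumerated subset of $A$ is one given by a map $\mathbb N_k\to A$; write $F\subseteq_f I$. The set $\mathrm{ord}$ is inductively generated by $\underline 0$ and, for every family $(\alpha_i)_{i\in I}$ with $I\in\mathfrak F$, $\alpha_i\in\mathrm{ord}$, an element $\mathrm S(\alpha_i)_{i\in I}$; for such $\alpha$, $I_\alpha=I$ and $\alpha_i$ are its definitional subordinals; $I_{\underline 0}=\emptyset$. For a finite list $F$ in $I_\alpha$, $\alpha_F$ is the list of the $\alpha_i$, $i\in F$. Relations between an element and a nonempty finite list, by simultaneous induction: $\alpha\le\beta^1,\dots,\beta^m$ means $\alpha_i<\beta^1,\dots,\beta^m$ for all $i\in I_\alpha$; $\alpha<\beta^1,\dots,\beta^m$ means there exist $F_1\subseteq_f I_{\beta^1},\dots,F_m\subseteq_f I_{\beta^m}$, not all empty, with $\alpha\le\beta^1_{F_1},\dots,\beta^m_{F_m}$ (concatenated list). *)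

theory Defs
  imports Main
begin

text \<open>Ordinal notations: an element is either the zero notation or S applied to a
  family indexed by a set I; the family is represented by its index set together
  with a function on the index type (values outside I are irrelevant).\<close>

datatype 'i ord = Zero | S "'i set" "'i \<Rightarrow> 'i ord"

fun idx :: "'i ord \<Rightarrow> 'i set" where
  "idx Zero = {}"
| "idx (S I f) = I"

fun sub :: "'i ord \<Rightarrow> 'i \<Rightarrow> 'i ord" where
  "sub Zero i = Zero"
| "sub (S I f) i = f i"

inductive in_ord :: "'i set set \<Rightarrow> 'i ord \<Rightarrow> bool" for F where
  "in_ord F Zero"
| "I \<in> F \<Longrightarrow> (\<forall>i. i \<in> I \<longrightarrow> in_ord F (f i)) \<Longrightarrow> in_ord F (S I f)"

text \<open>alpha_F for a finitely enumerated subset F (a list of indices).\<close>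
definition subs :: "'i ord \<Rightarrow> 'i list \<Rightarrow> 'i ord list" where
  "subs \<beta> Fs = map (sub \<beta>) Fs"

inductive ord_le :: "'i ord \<Rightarrow> 'i ord list \<Rightarrow> bool"
  and ord_lt :: "'i ord \<Rightarrow> 'i ord list \<Rightarrow> bool" where
  le_intro: "\<beta>s \<noteq> [] \<Longrightarrow> (\<forall>i. i \<in> idx \<alpha> \<longrightarrow> ord_lt (sub \<alpha> i) \<beta>s) \<Longrightarrow> ord_le \<alpha> \<beta>s"
| lt_intro: "length Fs = length \<beta>s \<Longrightarrow>
    (\<forall>j < length \<beta>s. set (Fs ! j) \<subseteq> idx (\<beta>s ! j)) \<Longrightarrow>
    (\<exists>j < length \<beta>s. Fs ! j \<noteq> []) \<Longrightarrow>
    ord_le \<alpha> (concat (map (\<lambda>j. subs (\<beta>s ! j) (Fs ! j)) [0..<length \<beta>s])) \<Longrightarrow>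
    ord_lt \<alpha> \<beta>s"

end

theory Submission
  imports Defs "HOL-Library.Multiset"
begin

definition childrel :: "('i ord \<times> 'i ord) set" where
  "childrel = {(y, a). \<exists>x \<in> idx a. y = sub a x}"

lemma wf_childrel: "wf childrel"
proof (rule acc_wfI, intro allI)
  fix a :: "'i ord"
  show "a \<in> Wellfounded.acc childrel"
  proof (induction a)
    case Zero
    show ?case by (rule accI) (auto simp: childrel_def)
  next
    case (S I f)
    show ?case
    proof (rule accI)
      fix y assume "(y, S I f) \<in> childrel"
      then obtain x where "y = f x" by (auto simp: childrel_def)
      then show "y \<in> Wellfounded.acc childrel" using S.IH[OF rangeI] by simp
    qed
  qed
qed

lemma mono_le_lt:
  shows "ord_le a bs \<Longrightarrow> set bs \<subseteq> set bs' \<Longrightarrow> ord_le a bs'"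
    and "ord_lt a bs \<Longrightarrow> set bs \<subseteq> set bs' \<Longrightarrow> ord_lt a bs'"
proof (induction arbitrary: bs' and bs' rule: ord_le_ord_lt.inducts)
  case (le_intro \<beta>s \<alpha>)
  then show ?case by (intro ord_le_ord_lt.le_intro) auto
next
  case (lt_intro Fs \<beta>s \<alpha>)
  define Fs' where "Fs' = map (\<lambda>b. concat (map (\<lambda>j. Fs ! j) (filter (\<lambda>j. \<beta>s ! j = b) [0..<length \<beta>s]))) bs'"
  have A: "length Fs' = length bs'" by (simp add: Fs'_def)
  have B: "\<forall>j<length bs'. set (Fs' ! j) \<subseteq> idx (bs' ! j)"
    using lt_intro.hyps(2) by (auto simp: Fs'_def) (metis subsetD)
  from lt_intro.hyps(3) obtain j where j: "j < length \<beta>s" "Fs ! j \<noteq> []" by blast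
  have "\<beta>s ! j \<in> set bs'" using j lt_intro.prems by auto
  then obtain j' where j': "j' < length bs'" "bs' ! j' = \<beta>s ! j" by (auto simp: in_set_conv_nth)
  have C: "\<exists>j<length bs'. Fs' ! j \<noteq> []"
    using j j' by (intro exI[of _ j']) (auto simp: Fs'_def)
  have D: "set (concat (map (\<lambda>j. subs (\<beta>s ! j) (Fs ! j)) [0..<length \<beta>s]))
      \<subseteq> set (concat (map (\<lambda>j. subs (bs' ! j) (Fs' ! j)) [0..<length bs']))"
  proof
    fix y assume "y \<in> set (concat (map (\<lambda>j. subs (\<beta>s ! j) (Fs ! j)) [0..<length \<beta>s]))"
    then obtain k x where k: "k < length \<beta>s" "x \<in> set (Fs ! k)" "y = sub (\<beta>s ! k) x"
      by (auto simp: subs_def)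
    have "\<beta>s ! k \<in> set bs'" using k lt_intro.prems by auto
    then obtain k' where k': "k' < length bs'" "bs' ! k' = \<beta>s ! k" by (auto simp: in_set_conv_nth)
    have "x \<in> set (Fs' ! k')" using k k' by (auto simp: Fs'_def)
    then show "y \<in> set (concat (map (\<lambda>j. subs (bs' ! j) (Fs' ! j)) [0..<length bs']))"
      using k k' by (auto simp: subs_def intro!: bexI[where x=k'])
  qed
  show ?case
    by (rule ord_le_ord_lt.lt_intro[OF A B C]) (rule lt_intro.IH[OF D])
qed

lemma main:
  "\<forall>\<gamma>s. mset \<gamma>s = M \<longrightarrow> \<gamma>s \<noteq> [] \<longrightarrow> \<not> (\<forall>\<gamma>\<in>set \<gamma>s. ord_lt \<gamma> \<gamma>s)"
proof (induction M rule: wf_induct[OF wf_mult[OF wf_childrel]])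
  case (1 M)
  show ?case
  proof (intro allI impI notI)
    fix \<gamma>s assume M: "mset \<gamma>s = M" and ne: "\<gamma>s \<noteq> []" and all: "\<forall>\<gamma>\<in>set \<gamma>s. ord_lt \<gamma> \<gamma>s"
    let ?n = "length \<gamma>s"
    have "\<forall>i. \<exists>Fs. i < ?n \<longrightarrow> length Fs = ?n \<and> (\<forall>j < ?n. set (Fs ! j) \<subseteq> idx (\<gamma>s ! j)) \<and>
       ord_le (\<gamma>s ! i) (concat (map (\<lambda>j. subs (\<gamma>s ! j) (Fs ! j)) [0..<?n]))"
    proof
      fix i show "\<exists>Fs. i < ?n \<longrightarrow> length Fs = ?n \<and> (\<forall>j < ?n. set (Fs ! j) \<subseteq> idx (\<gamma>s ! j)) \<and>
       ord_le (\<gamma>s ! i) (concat (map (\<lambda>j. subs (\<gamma>s ! j) (Fs ! j)) [0..<?n]))"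
      proof (cases "i < ?n")
        case True
        then have "ord_lt (\<gamma>s ! i) \<gamma>s" using all by auto
        then show ?thesis by (cases rule: ord_lt.cases) auto
      qed auto
    qed
    then obtain G where G: "\<And>i. i < ?n \<Longrightarrow> length (G i) = ?n \<and> (\<forall>j < ?n. set (G i ! j) \<subseteq> idx (\<gamma>s ! j)) \<and>
       ord_le (\<gamma>s ! i) (concat (map (\<lambda>j. subs (\<gamma>s ! j) (G i ! j)) [0..<?n]))"
      by metis
    define D' where "D' i = concat (map (\<lambda>j. subs (\<gamma>s ! j) (G i ! j)) [0..<?n])" for i
    define D where "D = concat (map D' [0..<?n])"
    have subD: "set (D' i) \<subseteq> set D" if "i < ?n" for i using that by (auto simp: D_def)
    have leD: "ord_le (\<gamma>s ! i) (D' i)" if "i < ?n" for i using G[OF that] by (simp add: D'_def)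
    have neD': "D' i \<noteq> []" if "i < ?n" for i using leD[OF that] by (cases rule: ord_le.cases) auto
    have neD: "D \<noteq> []" using neD'[of 0] subD[of 0] ne by auto
    have elD: "\<exists>j < ?n. \<exists>x \<in> idx (\<gamma>s ! j). y = sub (\<gamma>s ! j) x" if "y \<in> set D" for y
      using that G by (fastforce simp: D_def D'_def subs_def)
    have allD: "\<forall>\<gamma>\<in>set D. ord_lt \<gamma> D"
    proof
      fix y assume "y \<in> set D"
      then obtain j x where jx: "j < ?n" "x \<in> idx (\<gamma>s ! j)" "y = sub (\<gamma>s ! j) x" using elD by blast
      from leD[OF jx(1)] have "ord_lt y (D' j)" using jx by (cases rule: ord_le.cases) auto
      then show "ord_lt y D" using mono_le_lt(2) subD[OF jx(1)] by blast
    qed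
    have "(mset D, M) \<in> mult childrel"
      using one_step_implies_mult[of "mset \<gamma>s" "mset D" childrel "{#}"] ne elD M
      by (fastforce simp: childrel_def in_set_conv_nth)
    then show False using 1 neD allD by blast
  qed
qed

theorem lemma4p5:
  fixes F :: "'i set set" and \<alpha>s :: "'i ord list"
  assumes "length \<alpha>s \<ge> 1"
    and "\<forall>i < length \<alpha>s. in_ord F (\<alpha>s ! i)"
  shows "\<not> (\<forall>i < length \<alpha>s. ord_lt (\<alpha>s ! i) \<alpha>s)"
proof
  assume h: "\<forall>i < length \<alpha>s. ord_lt (\<alpha>s ! i) \<alpha>s"
  have "\<forall>\<gamma>\<in>set \<alpha>s. ord_lt \<gamma> \<alpha>s" using h by (auto simp: in_set_conv_nth)
  moreover have "\<alpha>s \<noteq> []" using assms(1) by auto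
  ultimately show False using main by blast
qed

end
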